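(* Let $G=(V,E)$ be a directed graph with $n$ vertices, $m$ edges and oriented incidence matrix $D\in\mathbb{R}^{m\times n}$, and let $\bm{y}\in\mathbb{R}^{n}$ be a signal over its nodes. Let $\Delta$ be either $L=D^{T}D$ (general trend filtering) or the Kronecker matrix $K$ (Kronecker trend filtering, when $G$ is the grid graph of a lattice $\{1,\dots,N\}^k$). For penalisation parameters $\lambda_{NI},\lambda_{F},\lambda_{T}>0$ let $$\hat{\bm{\beta}}^{NITF}=\arg\min_{\bm{\beta}\in\mathbb{R}^{n}}\tfrac12\|\bm{y}-\bm{\beta}\|_2^2+\lambda_{NI}\|D\bm{\beta}\|_{+}+\lambda_{T}\|\Delta\bm{\beta}\|_1,$$ $$\hat{\bm{\beta}}^{FLTF}=\arg\min_{\bm{\beta}\in\mathbb{R}^{n}}\tfrac12\|\bm{y}-\bm{\beta}\|_2^2+\lambda_{F}\|D\bm{\beta}\|_1+\lambda_{T}\|\Delta\bm{\beta}\|_1.$$ Then for any such parameters $$\sum_{i=1}^{n}y_i=\sum_{i=1}^{n}\hat{\beta}^{NITF}_i=\sum_{i=1}^{n}\hat{\beta}^{FLTF}_i.$$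
   Context: The oriented incidence matrix $D\in\mathbb{R}^{m\times n}$ has $D_{i,j}=1$ if vertex $j$ is the source of edge $i$, $D_{i,j}=-1$ if vertex $j$ is the target of edge $i$, and $0$ otherwise. For $\bm{x}\in\mathbb{R}^m$, $\|\bm{x}\|_{+}=\sum_i\max(x_i,0)$. For the lattice $\{1,\dots,N\}^{k}$ (with edges between lattice neighbours differing by $1$ in one coordinate, oriented in the increasing direction), $D^{t}\in\mathbb{R}^{(N-2)\times N}$ is the second-difference matrix whose $i$-th row has entries $1,-2,1$ in columns $i,i+1,i+2$ and zeros elsewhere, and $K$ is the vertical stack of the $k$ blocks $I_N\otimes\cdots\otimes D^{t}\otimes\cdots\otimes I_N$ ($D^{t}$ in the $j$-th position, $j=1,\dots,k$), $\otimes$ the Kronecker product. *)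

theory Defs
  imports Complex_Main
begin

text \<open>A directed graph is given by a finite vertex set V and an edge set
E of ordered pairs (source, target), without self-loops. Signals on the
nodes are functions 'v => real (only values on V matter).\<close>

definition digraph :: "'v set \<Rightarrow> ('v \<times> 'v) set \<Rightarrow> bool" where
  "digraph V E \<longleftrightarrow> finite V \<and> E \<subseteq> V \<times> V \<and> (\<forall>(u,w)\<in>E. u \<noteq> w)"

definition inc :: "('v \<times> 'v) \<Rightarrow> 'v \<Rightarrow> real" where
  "inc e v = (if v = fst e then 1 else if v = snd e then -1 else 0)"

definition Dmul :: "'v set \<Rightarrow> ('v \<times> 'v) \<Rightarrow> ('v \<Rightarrow> real) \<Rightarrow> real" where
  "Dmul V e \<beta> = (\<Sum>v\<in>V. inc e v * \<beta> v)"

definition Lmul :: "'v set \<Rightarrow> ('v \<times> 'v) set \<Rightarrow> ('v \<Rightarrow> real) \<Rightarrow> 'v \<Rightarrow> real" where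
  "Lmul V E \<beta> v = (\<Sum>e\<in>E. inc e v * Dmul V e \<beta>)"

definition norm_plus_D :: "'v set \<Rightarrow> ('v \<times> 'v) set \<Rightarrow> ('v \<Rightarrow> real) \<Rightarrow> real" where
  "norm_plus_D V E \<beta> = (\<Sum>e\<in>E. max (Dmul V e \<beta>) 0)"

definition norm1_D :: "'v set \<Rightarrow> ('v \<times> 'v) set \<Rightarrow> ('v \<Rightarrow> real) \<Rightarrow> real" where
  "norm1_D V E \<beta> = (\<Sum>e\<in>E. \<bar>Dmul V e \<beta>\<bar>)"

definition norm1_L :: "'v set \<Rightarrow> ('v \<times> 'v) set \<Rightarrow> ('v \<Rightarrow> real) \<Rightarrow> real" where
  "norm1_L V E \<beta> = (\<Sum>v\<in>V. \<bar>Lmul V E \<beta> v\<bar>)"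

definition lattice :: "nat \<Rightarrow> nat \<Rightarrow> nat list set" where
  "lattice N k = {x. length x = k \<and> set x \<subseteq> {1..N}}"

definition lattice_edge :: "nat \<Rightarrow> nat \<Rightarrow> nat list \<Rightarrow> nat list \<Rightarrow> bool" where
  "lattice_edge N k x z \<longleftrightarrow> x \<in> lattice N k \<and> z \<in> lattice N k \<and>
     (\<exists>j<k. z = x[j := x ! j + 1])"

text \<open>||K b||_1 for the Kronecker matrix K (stack over j of
I \<otimes> ... \<otimes> D^t \<otimes> ... \<otimes> I). The rows of the j-th block are indexed by
lattice points x with x_j in {1..N-2}, the row being
b(x) - 2 b(x + e_j) + b(x + 2 e_j).\<close>
definition norm1_K :: "nat \<Rightarrow> nat \<Rightarrow> (nat list \<Rightarrow> real) \<Rightarrow> real" where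
  "norm1_K N k b = (\<Sum>j<k. \<Sum>x\<in>{x\<in>lattice N k. x ! j + 2 \<le> N}.
      \<bar>b x - 2 * b (x[j := x ! j + 1]) + b (x[j := x ! j + 2])\<bar>)"

definition sqloss :: "'v set \<Rightarrow> ('v \<Rightarrow> real) \<Rightarrow> ('v \<Rightarrow> real) \<Rightarrow> real" where
  "sqloss V y \<beta> = (1/2) * (\<Sum>v\<in>V. (y v - \<beta> v)^2)"

definition is_minimiser :: "'v set \<Rightarrow> (('v \<Rightarrow> real) \<Rightarrow> real) \<Rightarrow> ('v \<Rightarrow> real) \<Rightarrow> bool" where
  "is_minimiser V f b \<longleftrightarrow> (\<forall>\<beta>. f b \<le> f \<beta>)"

end

theory Submission
  imports Defs
begin

lemma sqloss_shift:
  "sqloss V y (\<lambda>v. b v + c) = sqloss V y b - c * (\<Sum>v\<in>V. y v - b v) + c^2 * real (card V) / 2"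
proof -
  have "(\<Sum>v\<in>V. (y v - (b v + c))^2) = (\<Sum>v\<in>V. (y v - b v)^2 - 2 * c * (y v - b v) + c^2)"
    by (rule sum.cong) (auto simp: power2_eq_square algebra_simps)
  also have "\<dots> = (\<Sum>v\<in>V. (y v - b v)^2) - 2 * c * (\<Sum>v\<in>V. y v - b v) + c^2 * real (card V)"
    by (simp add: sum.distrib sum_subtractf sum_distrib_left[symmetric])
  finally show ?thesis unfolding sqloss_def by (simp add: algebra_simps)
qed

lemma min_sum:
  assumes fin: "finite V"
    and inv: "\<And>b c. P (\<lambda>v. b v + c) = P b"
    and m: "is_minimiser V (\<lambda>\<beta>. sqloss V y \<beta> + P \<beta>) b"
  shows "(\<Sum>v\<in>V. y v) = (\<Sum>v\<in>V. b v)"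
proof (cases "V = {}")
  case True then show ?thesis by simp
next
  case False
  define S where "S = (\<Sum>v\<in>V. y v - b v)"
  define n where "n = real (card V)"
  have n: "n > 0" using False fin by (simp add: n_def card_gt_0_iff)
  define c where "c = S / n"
  have "sqloss V y b + P b \<le> sqloss V y (\<lambda>v. b v + c) + P (\<lambda>v. b v + c)"
    using m unfolding is_minimiser_def by blast
  hence "0 \<le> - c * S + c^2 * n / 2" using sqloss_shift[of V y b c] inv[of b c]
    by (simp add: S_def n_def)
  hence "0 \<le> (S * S) / n / 2 - (S * S) / n" using n by (simp add: c_def power2_eq_square)
  hence "(S * S) / n \<le> 0" by simp
  hence "S * S \<le> 0" using n by (simp add: divide_le_0_iff)
  hence "S = 0" by (metis mult_eq_0_iff not_square_less_zero order_antisym zero_le_square)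
  thus ?thesis by (simp add: S_def sum_subtractf)
qed

lemma inc_sum0:
  assumes G: "digraph V E" and e: "e \<in> E"
  shows "(\<Sum>v\<in>V. inc e v) = 0"
proof -
  obtain u w where ew: "e = (u, w)" by force
  have uw: "u \<in> V" "w \<in> V" "u \<noteq> w" using G e ew unfolding digraph_def by auto
  have fin: "finite V" using G unfolding digraph_def by auto
  have "(\<Sum>v\<in>V. inc e v) = (\<Sum>v\<in>V. (if v = u then 1 else 0) - (if v = w then 1 else 0))"
    by (rule sum.cong) (auto simp: inc_def ew uw)
  also have "\<dots> = 0" using fin uw by (simp add: sum_subtractf)
  finally show ?thesis .
qed

lemma Dmul_shift:
  assumes G: "digraph V E" and e: "e \<in> E"
  shows "Dmul V e (\<lambda>v. b v + c) = Dmul V e b"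
proof -
  have "Dmul V e (\<lambda>v. b v + c) = Dmul V e b + c * (\<Sum>v\<in>V. inc e v)"
    unfolding Dmul_def by (simp add: algebra_simps sum.distrib sum_distrib_left)
  thus ?thesis using inc_sum0[OF G e] by simp
qed

theorem theorem2p4:
  fixes V :: "'v set" and E :: "('v \<times> 'v) set" and y :: "'v \<Rightarrow> real"
    and T :: "('v \<Rightarrow> real) \<Rightarrow> real"
    and lamNI lamF lamT :: real and bNI bFL :: "'v \<Rightarrow> real"
  assumes G: "digraph V E"
    and Delta: "T = norm1_L V E \<or>
      (\<exists>N k \<phi>. bij_betw \<phi> V (lattice N k) \<and>
         E = {(u, w). u \<in> V \<and> w \<in> V \<and> lattice_edge N k (\<phi> u) (\<phi> w)} \<and>
         T = (\<lambda>\<beta>. norm1_K N k (\<beta> \<circ> inv_into V \<phi>)))"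
    and pos: "lamNI > 0" "lamF > 0" "lamT > 0"
    and NI: "is_minimiser V (\<lambda>\<beta>. sqloss V y \<beta> + lamNI * norm_plus_D V E \<beta> + lamT * T \<beta>) bNI"
    and FL: "is_minimiser V (\<lambda>\<beta>. sqloss V y \<beta> + lamF * norm1_D V E \<beta> + lamT * T \<beta>) bFL"
  shows "(\<Sum>v\<in>V. y v) = (\<Sum>v\<in>V. bNI v) \<and> (\<Sum>v\<in>V. bNI v) = (\<Sum>v\<in>V. bFL v)"
proof -
  have fin: "finite V" using G unfolding digraph_def by auto
  have Tinv: "T (\<lambda>v. b v + c) = T b" for b c
    using Delta
  proof
    assume "T = norm1_L V E"
    moreover have "Lmul V E (\<lambda>v. b v + c) x = Lmul V E b x" for x
      unfolding Lmul_def by (rule sum.cong) (auto simp: Dmul_shift[OF G])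
    ultimately show ?thesis unfolding norm1_L_def by simp
  next
    assume "\<exists>N k \<phi>. bij_betw \<phi> V (lattice N k) \<and>
         E = {(u, w). u \<in> V \<and> w \<in> V \<and> lattice_edge N k (\<phi> u) (\<phi> w)} \<and>
         T = (\<lambda>\<beta>. norm1_K N k (\<beta> \<circ> inv_into V \<phi>))"
    then obtain N k \<phi> where "T = (\<lambda>\<beta>. norm1_K N k (\<beta> \<circ> inv_into V \<phi>))" by blast
    thus ?thesis unfolding norm1_K_def by (simp add: o_def algebra_simps)
  qed
  have D1: "norm_plus_D V E (\<lambda>v. b v + c) = norm_plus_D V E b" for b c
    unfolding norm_plus_D_def by (rule sum.cong) (auto simp: Dmul_shift[OF G])
  have D2: "norm1_D V E (\<lambda>v. b v + c) = norm1_D V E b" for b c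
    unfolding norm1_D_def by (rule sum.cong) (auto simp: Dmul_shift[OF G])
  have 1: "(\<Sum>v\<in>V. y v) = (\<Sum>v\<in>V. bNI v)"
    by (rule min_sum[OF fin _ NI[unfolded add.assoc]]) (simp add: D1 Tinv)
  have 2: "(\<Sum>v\<in>V. y v) = (\<Sum>v\<in>V. bFL v)"
    by (rule min_sum[OF fin _ FL[unfolded add.assoc]]) (simp add: D2 Tinv)
  show ?thesis using 1 2 by simp
qed

end
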